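(* Let $\mathbb{Z}$ be a finite-dimensional Euclidean space, $F_i:\mathbb{Z}\to\mathbb{Z}$ ($i=1,\dots,N$) be $\frac1{L_0}$-co-coercive, $F=\frac1N\sum_iF_i$, and suppose there is $\sigma>0$ such that for a random index $i$ drawn from a given distribution, $\mathbb{E}[F_i(z)]=F(z)$ and $\mathbb{E}\|F_i(z)-F(z)\|^2\le\sigma^2$ for all $z$. Let $\{z^k\}$ be a sequence of iterates (produced by the stochastic inexact Halpern scheme) and, at iteration $k$, let $S_k^{(1)},S_k^{(2)}$ be random minibatches of i.i.d. indices with $|S_k^{(1)}|=N_k^{(1)}$, $|S_k^{(2)}|=N_k^{(2)}$, and $p_k\in(0,1]$ with $p_0=1$. Define $\widetilde F(z^k):=\frac1{N_k^{(1)}}\sum_{i\in S_k^{(1)}}F_i(z^k)$ with probability $p_k$, and $\widetilde F(z^k):=\widetilde F(z^{k-1})+\frac1{N_k^{(2)}}\sum_{i\in S_k^{(2)}}(F_i(z^k)-F_i(z^{k-1}))$ with probability $1-p_k$. Then for all $k\ge1$, \[ \mathbb{E}\|\widetilde F(z^k)-F(z^k)\|^2\le\frac{p_k\sigma^2}{N_k^{(1)}}+(1-p_k)\Big(\mathbb{E}\|\widetilde F(z^{k-1})-F(z^{k-1})\|^2+\frac{L_0^2}{N_k^{(2)}}\mathbb{E}\|z^k-z^{k-1}\|^2\Big). \] Moreover, given $\epsilon>0$, $a>0$, if $\sigma_k:=\epsilon(k+1)^{-a}$, $p_k=1-\frac{(k/(k+1))^{2a}}{2-(k/(k+1))^{2a+1}}$,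 $N_k^{(1)}=\big\lceil 2\sigma^2/(\epsilon^2(k+1)^{-2a})\big\rceil$ and $N_k^{(2)}=\big\lceil 2L_0^2\|z^k-z^{k-1}\|^2/(\epsilon^2(k+1)^{-(2a+1)})\big\rceil$ for $k\ge0$ ($N_0^{(2)}$ not needed), then $\mathbb{E}\|\widetilde F(z^k)-F(z^k)\|^2\le\sigma_k^2$ for all $k\ge0$.
   Context: $c$-co-coercive means $\langle F(x_1)-F(x_2),x_1-x_2\rangle\ge c\|F(x_1)-F(x_2)\|^2$ for all $x_1,x_2$. $\mathbb{E}$ is the expectation over all randomness up to iteration $k$. *)

theory Defs
  imports "HOL-Probability.Probability"
begin

definition cocoercive :: "real \<Rightarrow> ('a::real_inner \<Rightarrow> 'a) \<Rightarrow> bool" where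
  "cocoercive c G \<longleftrightarrow> (\<forall>x1 x2. inner (G x1 - G x2) (x1 - x2) \<ge> c * (norm (G x1 - G x2))\<^sup>2)"

fun iid_pmf :: "'b pmf \<Rightarrow> nat \<Rightarrow> 'b list pmf" where
  "iid_pmf D 0 = return_pmf []"
| "iid_pmf D (Suc n) = bind_pmf D (\<lambda>i. map_pmf (Cons i) (iid_pmf D n))"

definition batch_avg :: "(nat \<Rightarrow> 'a::real_vector) \<Rightarrow> nat list \<Rightarrow> 'a" where
  "batch_avg G S = (1 / real (length S)) *\<^sub>R sum_list (map G S)"

text \<open>Joint law of the history [(z^0, Ft(z^0)), ..., (z^k, Ft(z^k))] of the scheme.
  upd k h gives z^(k+1) from the history h up to iteration k (arbitrary adapted rule,
  e.g. the stochastic inexact Halpern step).  N2 k z^k z^(k-1) is the size of the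
  second minibatch at iteration k (may depend on the current iterates).\<close>
primrec svrg_hist ::
  "(nat \<Rightarrow> 'a::euclidean_space \<Rightarrow> 'a) \<Rightarrow> nat pmf \<Rightarrow> (nat \<Rightarrow> real) \<Rightarrow> (nat \<Rightarrow> nat)
   \<Rightarrow> (nat \<Rightarrow> 'a \<Rightarrow> 'a \<Rightarrow> nat) \<Rightarrow> (nat \<Rightarrow> ('a \<times> 'a) list \<Rightarrow> 'a) \<Rightarrow> 'a \<Rightarrow> nat
   \<Rightarrow> ('a \<times> 'a) list pmf" where
  "svrg_hist Fs D p N1 N2 upd z0 0 =
     map_pmf (\<lambda>S. [(z0, batch_avg (\<lambda>i. Fs i z0) S)]) (iid_pmf D (N1 0))"
| "svrg_hist Fs D p N1 N2 upd z0 (Suc k) =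
     bind_pmf (svrg_hist Fs D p N1 N2 upd z0 k) (\<lambda>h.
       bind_pmf (bernoulli_pmf (p (Suc k))) (\<lambda>b.
         if b then
           map_pmf (\<lambda>S. h @ [(upd k h, batch_avg (\<lambda>i. Fs i (upd k h)) S)])
             (iid_pmf D (N1 (Suc k)))
         else
           map_pmf (\<lambda>S. h @ [(upd k h, snd (last h)
                 + batch_avg (\<lambda>i. Fs i (upd k h) - Fs i (fst (last h))) S)])
             (iid_pmf D (N2 (Suc k) (upd k h) (fst (last h))))))"

end

theory Submission
  imports Defs
begin


lemma E_cong:
  fixes f g :: "'b \<Rightarrow> 'c::{banach, second_countable_topology}"
  assumes "\<And>x. x \<in> set_pmf M \<Longrightarrow> f x = g x"
  shows "measure_pmf.expectation M f = measure_pmf.expectation M g"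
  by (rule integral_cong_AE) (auto intro!: AE_pmfI assms)

lemma E_mono:
  fixes f g :: "'b \<Rightarrow> real"
  assumes "finite (set_pmf M)" "\<And>x. x \<in> set_pmf M \<Longrightarrow> f x \<le> g x"
  shows "measure_pmf.expectation M f \<le> measure_pmf.expectation M g"
  by (rule integral_mono_AE) (auto intro!: AE_pmfI assms integrable_measure_pmf_finite)

lemma E_bind:
  fixes h :: "'b \<Rightarrow> 'c::{banach, second_countable_topology}"
  assumes "finite (set_pmf p)" "\<And>x. x \<in> set_pmf p \<Longrightarrow> finite (set_pmf (f x))"
  shows "measure_pmf.expectation (p \<bind> f) h
       = measure_pmf.expectation p (\<lambda>x. measure_pmf.expectation (f x) h)"
  apply (subst pmf_expectation_bind[of "set_pmf p"])
  using assms apply auto[3]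
  apply (subst integral_measure_pmf[of "set_pmf p"])
  using assms apply auto
  done

lemma finite_bind_pmf:
  assumes "finite (set_pmf M)" "\<And>x. x \<in> set_pmf M \<Longrightarrow> finite (set_pmf (f x))"
  shows "finite (set_pmf (M \<bind> f))"
  using assms by (simp add: set_bind_pmf)

lemma finite_bool_pmf: "finite (set_pmf (M :: bool pmf))"
  by (rule finite_subset[OF subset_UNIV]) simp

lemma fin_iid: "finite (set_pmf D) \<Longrightarrow> finite (set_pmf (iid_pmf D n))"
  by (induction n) (auto intro!: finite_bind_pmf)

lemma len_iid: "S \<in> set_pmf (iid_pmf D n) \<Longrightarrow> length S = n"
  by (induction n arbitrary: S) (auto simp: set_bind_pmf)

lemma E_iid_Suc:
  fixes g :: "'b list \<Rightarrow> 'c::{banach, second_countable_topology}"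
  assumes "finite (set_pmf D)"
  shows "measure_pmf.expectation (iid_pmf D (Suc n)) g
       = measure_pmf.expectation D (\<lambda>i. measure_pmf.expectation (iid_pmf D n) (\<lambda>S. g (i # S)))"
  using assms by (simp add: E_bind fin_iid)

lemma one_step:
  fixes Y :: "nat \<Rightarrow> 'a::euclidean_space"
  assumes fin: "finite (set_pmf D)" and m0: "measure_pmf.expectation D Y = 0"
  shows "measure_pmf.expectation D (\<lambda>i. (norm (c + Y i))\<^sup>2)
       = (norm c)\<^sup>2 + measure_pmf.expectation D (\<lambda>i. (norm (Y i))\<^sup>2)"
proof -
  have I: "integrable (measure_pmf D) f" for f :: "nat \<Rightarrow> real"
    using fin by (rule integrable_measure_pmf_finite)
  have "(\<lambda>i. (norm (c + Y i))\<^sup>2) = (\<lambda>i. (norm c)\<^sup>2 + (2 * (c \<bullet> Y i) + (norm (Y i))\<^sup>2))"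
    by (auto simp: power2_norm_eq_inner inner_add_left inner_add_right inner_commute)
  hence "measure_pmf.expectation D (\<lambda>i. (norm (c + Y i))\<^sup>2)
     = (norm c)\<^sup>2 + (2 * measure_pmf.expectation D (\<lambda>i. c \<bullet> Y i) + measure_pmf.expectation D (\<lambda>i. (norm (Y i))\<^sup>2))"
    by (simp add: I integral_add)
  moreover have "measure_pmf.expectation D (\<lambda>i. c \<bullet> Y i) = 0"
    using m0 by (simp add: integrable_measure_pmf_finite fin)
  ultimately show ?thesis by simp
qed

lemma sumsq:
  fixes Y :: "nat \<Rightarrow> 'a::euclidean_space"
  assumes fin: "finite (set_pmf D)" and m0: "measure_pmf.expectation D Y = 0"
  shows "measure_pmf.expectation (iid_pmf D n) (\<lambda>S. (norm (c + sum_list (map Y S)))\<^sup>2)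
       = (norm c)\<^sup>2 + real n * measure_pmf.expectation D (\<lambda>i. (norm (Y i))\<^sup>2)"
proof (induction n arbitrary: c)
  case 0
  then show ?case by simp
next
  case (Suc n)
  have "measure_pmf.expectation (iid_pmf D (Suc n)) (\<lambda>S. (norm (c + sum_list (map Y S)))\<^sup>2)
      = measure_pmf.expectation D (\<lambda>i. measure_pmf.expectation (iid_pmf D n)
           (\<lambda>S. (norm ((c + Y i) + sum_list (map Y S)))\<^sup>2))"
    by (subst E_iid_Suc[OF fin]) (simp add: add.assoc)
  also have "\<dots> = measure_pmf.expectation D (\<lambda>i. (norm (c + Y i))\<^sup>2
           + real n * measure_pmf.expectation D (\<lambda>i. (norm (Y i))\<^sup>2))"
    by (simp add: Suc.IH)
  also have "\<dots> = measure_pmf.expectation D (\<lambda>i. (norm (c + Y i))\<^sup>2)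
           + real n * measure_pmf.expectation D (\<lambda>i. (norm (Y i))\<^sup>2)"
    by (simp add: integrable_measure_pmf_finite fin)
  also have "\<dots> = (norm c)\<^sup>2 + real (Suc n) * measure_pmf.expectation D (\<lambda>i. (norm (Y i))\<^sup>2)"
    by (simp add: one_step[OF fin m0] algebra_simps)
  finally show ?case .
qed

lemma sum_list_minus_const:
  fixes X :: "nat \<Rightarrow> 'a::real_vector"
  shows "sum_list (map (\<lambda>i. X i - m) S) = sum_list (map X S) - real (length S) *\<^sub>R m"
  by (induction S) (auto simp: algebra_simps)

lemma batch:
  fixes X :: "nat \<Rightarrow> 'a::euclidean_space"
  assumes fin: "finite (set_pmf D)" and n: "n > 0"
    and m: "measure_pmf.expectation D X = m"
  shows "measure_pmf.expectation (iid_pmf D n) (\<lambda>S. (norm (c + (batch_avg X S - m)))\<^sup>2)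
       = (norm c)\<^sup>2 + measure_pmf.expectation D (\<lambda>i. (norm (X i - m))\<^sup>2) / real n"
proof -
  have m0: "measure_pmf.expectation D (\<lambda>i. X i - m) = 0"
    using m by (simp add: integrable_measure_pmf_finite fin)
  have "measure_pmf.expectation (iid_pmf D n) (\<lambda>S. (norm (c + (batch_avg X S - m)))\<^sup>2)
     = measure_pmf.expectation (iid_pmf D n) (\<lambda>S. (1 / real n)\<^sup>2 *
          (norm (real n *\<^sub>R c + sum_list (map (\<lambda>i. X i - m) S)))\<^sup>2)"
  proof (rule E_cong)
    fix S assume "S \<in> set_pmf (iid_pmf D n)"
    hence l: "length S = n" by (rule len_iid)
    have "c + (batch_avg X S - m) = (1 / real n) *\<^sub>R (real n *\<^sub>R c + sum_list (map (\<lambda>i. X i - m) S))"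
      using n l by (simp add: batch_avg_def sum_list_minus_const algebra_simps)
    thus "(norm (c + (batch_avg X S - m)))\<^sup>2 = (1 / real n)\<^sup>2 *
          (norm (real n *\<^sub>R c + sum_list (map (\<lambda>i. X i - m) S)))\<^sup>2"
      by (simp add: power_divide)
  qed
  also have "\<dots> = (1 / real n)\<^sup>2 * ((norm (real n *\<^sub>R c))\<^sup>2 + real n * measure_pmf.expectation D (\<lambda>i. (norm (X i - m))\<^sup>2))"
    by (simp add: sumsq[OF fin m0])
  also have "\<dots> = (norm c)\<^sup>2 + measure_pmf.expectation D (\<lambda>i. (norm (X i - m))\<^sup>2) / real n"
    using n by (simp add: power_mult_distrib field_simps power2_eq_square)
  finally show ?thesis .
qed

lemma var_le:
  fixes X :: "nat \<Rightarrow> 'a::euclidean_space"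
  assumes fin: "finite (set_pmf D)" and m: "measure_pmf.expectation D X = m"
  shows "measure_pmf.expectation D (\<lambda>i. (norm (X i - m))\<^sup>2) \<le> measure_pmf.expectation D (\<lambda>i. (norm (X i))\<^sup>2)"
proof -
  have I: "integrable (measure_pmf D) f" for f :: "nat \<Rightarrow> real"
    using fin by (rule integrable_measure_pmf_finite)
  have "(\<lambda>i. (norm (X i - m))\<^sup>2) = (\<lambda>i. (norm (X i))\<^sup>2 - 2 * (m \<bullet> X i) + (norm m)\<^sup>2)"
    by (auto simp: power2_norm_eq_inner inner_diff_left inner_diff_right inner_commute)
  hence "measure_pmf.expectation D (\<lambda>i. (norm (X i - m))\<^sup>2)
     = measure_pmf.expectation D (\<lambda>i. (norm (X i))\<^sup>2) - 2 * measure_pmf.expectation D (\<lambda>i. m \<bullet> X i) + (norm m)\<^sup>2"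
    by (simp add: I)
  moreover have "measure_pmf.expectation D (\<lambda>i. m \<bullet> X i) = (norm m)\<^sup>2"
    using m by (simp add: integrable_measure_pmf_finite fin power2_norm_eq_inner)
  ultimately show ?thesis by simp
qed

lemma lip:
  fixes G :: "'a::real_inner \<Rightarrow> 'a"
  assumes c: "cocoercive (1 / L0) G" and L0: "L0 > 0"
  shows "(norm (G x - G y))\<^sup>2 \<le> L0\<^sup>2 * (norm (x - y))\<^sup>2"
proof -
  have "(1 / L0) * (norm (G x - G y))\<^sup>2 \<le> inner (G x - G y) (x - y)"
    using c by (simp add: cocoercive_def)
  also have "\<dots> \<le> norm (G x - G y) * norm (x - y)" by (rule norm_cauchy_schwarz)
  finally have h: "(norm (G x - G y))\<^sup>2 \<le> L0 * (norm (G x - G y) * norm (x - y))"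
    using L0 by (simp add: field_simps)
  have "norm (G x - G y) \<le> L0 * norm (x - y)"
  proof (cases "norm (G x - G y) = 0")
    case False
    hence "norm (G x - G y) > 0" by simp
    with h show ?thesis by (simp add: power2_eq_square)
  qed (use L0 in simp)
  hence "(norm (G x - G y))\<^sup>2 \<le> (L0 * norm (x - y))\<^sup>2"
    by (intro power_mono) auto
  thus ?thesis by (simp add: power_mult_distrib)
qed

lemma fin_hist:
  assumes "finite (set_pmf D)"
  shows "finite (set_pmf (svrg_hist Fs D p N1 N2 upd z0 k))"
  by (induction k) (auto intro!: finite_bind_pmf finite_bool_pmf fin_iid assms)

lemma len_hist:
  "h \<in> set_pmf (svrg_hist Fs D p N1 N2 upd z0 k) \<Longrightarrow> length h = Suc k"
  by (induction k arbitrary: h) (auto simp: set_bind_pmf split: if_splits)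

lemma E_hist_Suc:
  fixes g :: "('a::euclidean_space \<times> 'a) list \<Rightarrow> real"
  assumes finD: "finite (set_pmf D)" and p: "0 \<le> p (Suc k)" "p (Suc k) \<le> 1"
  shows "measure_pmf.expectation (svrg_hist Fs D p N1 N2 upd z0 (Suc k)) g =
   measure_pmf.expectation (svrg_hist Fs D p N1 N2 upd z0 k) (\<lambda>h.
     measure_pmf.expectation (iid_pmf D (N1 (Suc k)))
        (\<lambda>S. g (h @ [(upd k h, batch_avg (\<lambda>i. Fs i (upd k h)) S)])) * p (Suc k)
   + measure_pmf.expectation (iid_pmf D (N2 (Suc k) (upd k h) (fst (last h))))
        (\<lambda>S. g (h @ [(upd k h, snd (last h)
             + batch_avg (\<lambda>i. Fs i (upd k h) - Fs i (fst (last h))) S)])) * (1 - p (Suc k)))"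
  apply (simp only: svrg_hist.simps)
  apply (subst E_bind)
    apply (rule fin_hist[OF finD])
   apply (auto intro!: finite_bind_pmf finite_bool_pmf fin_iid finD)[1]
  apply (rule E_cong)
  apply (subst E_bind)
    apply (rule finite_bool_pmf)
   apply (auto intro!: fin_iid finD)[1]
  using p apply simp
  done

lemma alg:
  fixes k a \<epsilon> :: real
  assumes k: "k \<ge> 1" and a: "a > 0"
  defines "p \<equiv> 1 - (k / (k + 1)) powr (2 * a) / (2 - (k / (k + 1)) powr (2 * a + 1))"
  shows "\<epsilon>\<^sup>2 * (k + 1) powr (- (2 * a)) / 2 * p
     + ((\<epsilon> * k powr (- a))\<^sup>2 + \<epsilon>\<^sup>2 * (k + 1) powr (- (2 * a + 1)) / 2) * (1 - p)
     \<le> (\<epsilon> * (k + 1) powr (- a))\<^sup>2"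
proof -
  define A where "A = k powr (2 * a)"
  define B where "B = (k + 1) powr (2 * a)"
  have A: "A > 0" "A \<le> B" using k a unfolding A_def B_def by (auto intro: powr_mono2)
  have B: "B > 0" using k unfolding B_def by simp
  have u: "(k / (k + 1)) powr (2 * a) = A / B" using k unfolding A_def B_def by (simp add: powr_divide)
  have u1: "(k / (k + 1)) powr (2 * a + 1) = A / B * (k / (k + 1))"
    using k by (simp add: powr_add u)
  have s1: "(k + 1) powr (- (2 * a)) = 1 / B" using k unfolding B_def by (simp add: powr_minus divide_inverse)
  have s2: "(k + 1) powr (- (2 * a + 1)) = 1 / (B * (k + 1))"
    using k unfolding B_def by (simp only: powr_minus powr_add powr_one) (simp add: divide_inverse)
  have "(k powr (- a))^2 = k powr (of_nat 2 * (- a))" using k by (intro powr_power) simp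
  hence s3: "(\<epsilon> * k powr (- a))\<^sup>2 = \<epsilon>\<^sup>2 / A"
    unfolding A_def by (simp add: power_mult_distrib powr_minus divide_inverse)
  have "((k + 1) powr (- a))^2 = (k + 1) powr (of_nat 2 * (- a))" using k by (intro powr_power) simp
  hence s4: "(\<epsilon> * (k + 1) powr (- a))\<^sup>2 = \<epsilon>\<^sup>2 / B"
    unfolding B_def by (simp add: power_mult_distrib powr_minus divide_inverse)
  have den: "A / B * (k / (k + 1)) < 2"
  proof -
    have "A / B \<le> 1" using A B by simp
    moreover have "k / (k + 1) \<le> 1" using k by simp
    ultimately have "A / B * (k / (k + 1)) \<le> 1"
      using A B k by (intro mult_le_one) auto
    thus ?thesis by simp
  qed
  have "A * k \<le> B * k" using A k by (intro mult_right_mono) auto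
  moreover have "B * k > 0" using B k by simp
  moreover have "2 * B * (k + 1) - A * k = 2 * B + 2 * (B * k) - A * k" by (simp add: algebra_simps)
  ultimately have pos: "2 * B * (k + 1) - A * k > 0" using B by linarith
  define Dn where "Dn = 2 * B * (k + 1) - A * k"
  have Dn: "Dn > 0" using pos unfolding Dn_def .
  define q where "q = 1 - p"
  have q: "q = A * (k + 1) / Dn"
  proof -
    have d: "2 - A / B * (k / (k + 1)) = Dn / (B * (k + 1))"
    proof -
      have bk: "B * (k + 1) > 0" "B + B * k > 0" using B k by (simp_all add: add_pos_pos)
      show ?thesis unfolding Dn_def using bk by (simp add: field_simps add_divide_distrib[symmetric])
    qed
    show ?thesis unfolding q_def p_def u u1 d using B k Dn by (simp add: field_simps)
  qed
  have key: "(1 - q) / 2 + q * (B / A + 1 / (2 * (k + 1))) = 1"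
  proof -
    have k1: "k + 1 > 0" using k by simp
    have h1: "q * (B / A) = B * (k + 1) / Dn" unfolding q using A Dn by (simp add: field_simps)
    have h2: "q * (1 / (2 * (k + 1))) = A / (2 * Dn)" unfolding q
    proof -
      have "Dn * 2 + Dn * (k * 2) = 2 * Dn * (1 + k)" by (simp add: algebra_simps)
      also have "\<dots> > 0" using k1 Dn by simp
      finally have "Dn * 2 + Dn * (k * 2) \<noteq> 0" by simp
      thus "A * (k + 1) / Dn * (1 / (2 * (k + 1))) = A / (2 * Dn)" using k1 Dn
        by (simp add: field_simps)
    qed
    have h3: "q / 2 = A * (k + 1) / (2 * Dn)" unfolding q using Dn by (simp add: field_simps)
    have "(1 - q) / 2 + q * (B / A + 1 / (2 * (k + 1))) = 1 / 2 - q / 2 + q * (B / A) + q * (1 / (2 * (k + 1)))"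
      by (simp add: algebra_simps diff_divide_distrib)
    also have "\<dots> = 1 / 2 + (2 * B * (k + 1) + A - A * (k + 1)) / (2 * Dn)"
      unfolding h1 h2 h3 using Dn by (simp add: field_simps)
    also have "2 * B * (k + 1) + A - A * (k + 1) = Dn" unfolding Dn_def by (simp add: algebra_simps)
    finally show ?thesis using Dn by simp
  qed
  have e0: "\<epsilon>\<^sup>2 * (1 / B) / 2 * (1 - q) + (\<epsilon>\<^sup>2 / A + \<epsilon>\<^sup>2 * (1 / (B * K)) / 2) * q
      = \<epsilon>\<^sup>2 / B * ((1 - q) / 2 + q * (B / A + 1 / (2 * K)))" if K: "K > 0" for K
    using A B K by (simp add: field_simps)
  have e: "\<epsilon>\<^sup>2 * (1 / B) / 2 * (1 - q) + (\<epsilon>\<^sup>2 / A + \<epsilon>\<^sup>2 * (1 / (B * (k + 1))) / 2) * q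
      = \<epsilon>\<^sup>2 / B * ((1 - q) / 2 + q * (B / A + 1 / (2 * (k + 1))))"
    by (rule e0) (use k in simp)
  have p: "p = 1 - q" unfolding q_def by simp
  show ?thesis
    unfolding s1 s2 s3 s4 p using e key by simp
qed

lemma ceil_bound:
  fixes y c :: real
  assumes y: "y \<ge> 0" and c: "c > 0"
  shows "y / real (nat \<lceil>2 * y / c\<rceil>) \<le> c / 2"
proof (cases "y = 0")
  case False
  hence yp: "y > 0" using y by simp
  have "2 * y / c \<le> real (nat \<lceil>2 * y / c\<rceil>)"
    by linarith
  moreover have pos: "2 * y / c > 0" using yp c by simp
  ultimately have "0 < real (nat \<lceil>2 * y / c\<rceil>) * (2 * y / c)"
    by (intro mult_pos_pos) linarith+
  with \<open>2 * y / c \<le> real (nat \<lceil>2 * y / c\<rceil>)\<close>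
  have "y / real (nat \<lceil>2 * y / c\<rceil>) \<le> y / (2 * y / c)"
    using yp by (intro divide_left_mono) auto
  also have "\<dots> = c / 2" using yp c by (simp add: field_simps)
  finally show ?thesis .
qed (use c in simp)

lemma p_range:
  fixes a :: real and k :: nat
  assumes a: "a > 0"
  shows "0 \<le> 1 - (real k / real (k + 1)) powr (2 * a) / (2 - (real k / real (k + 1)) powr (2 * a + 1))"
    and "1 - (real k / real (k + 1)) powr (2 * a) / (2 - (real k / real (k + 1)) powr (2 * a + 1)) \<le> 1"
proof -
  define r where "r = real k / real (k + 1)"
  have r: "0 \<le> r" "r \<le> 1" unfolding r_def by auto
  have u: "r powr (2 * a) \<le> 1" "0 \<le> r powr (2 * a)" using r a by (auto intro: powr_le1)
  have v: "r powr (2 * a + 1) \<le> 1" "0 \<le> r powr (2 * a + 1)" using r a by (auto intro: powr_le1)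
  have d: "2 - r powr (2 * a + 1) \<ge> 1" using v by simp
  have "r powr (2 * a) / (2 - r powr (2 * a + 1)) \<le> 1"
    using u d by (simp add: divide_le_eq)
  moreover have "r powr (2 * a) / (2 - r powr (2 * a + 1)) \<ge> 0"
    using u d by simp
  ultimately show "0 \<le> 1 - (real k / real (k + 1)) powr (2 * a) / (2 - (real k / real (k + 1)) powr (2 * a + 1))"
    and "1 - (real k / real (k + 1)) powr (2 * a) / (2 - (real k / real (k + 1)) powr (2 * a + 1)) \<le> 1"
    unfolding r_def by simp_all
qed



theorem lemma6:
  fixes Fs :: "nat \<Rightarrow> 'a::euclidean_space \<Rightarrow> 'a" and N :: nat and L0 \<sigma> :: real
    and D :: "nat pmf" and upd :: "nat \<Rightarrow> ('a \<times> 'a) list \<Rightarrow> 'a" and z0 :: 'a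
    and F :: "'a \<Rightarrow> 'a"
  assumes F_def: "F = (\<lambda>z. (1 / real N) *\<^sub>R (\<Sum>i<N. Fs i z))"
    and N_pos: "N > 0"
    and L0_pos: "L0 > 0"
    and coco: "\<forall>i<N. cocoercive (1 / L0) (Fs i)"
    and D_supp: "set_pmf D \<subseteq> {..<N}"
    and sigma_pos: "\<sigma> > 0"
    and unbiased: "\<forall>z. measure_pmf.expectation D (\<lambda>i. Fs i z) = F z"
    and var_bound: "\<forall>z. measure_pmf.expectation D (\<lambda>i. (norm (Fs i z - F z))\<^sup>2) \<le> \<sigma>\<^sup>2"
  shows
   "(\<forall>(p :: nat \<Rightarrow> real) (N1 :: nat \<Rightarrow> nat) (N2 :: nat \<Rightarrow> nat).
      (\<forall>k. 0 < p k \<and> p k \<le> 1) \<and> p 0 = 1 \<and> (\<forall>k. N1 k > 0) \<and> (\<forall>k. N2 k > 0) \<longrightarrow>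
      (\<forall>k\<ge>1.
        measure_pmf.expectation (svrg_hist Fs D p N1 (\<lambda>j _ _. N2 j) upd z0 k)
          (\<lambda>h. (norm (snd (h ! k) - F (fst (h ! k))))\<^sup>2)
        \<le> p k * \<sigma>\<^sup>2 / real (N1 k)
          + (1 - p k) *
            (measure_pmf.expectation (svrg_hist Fs D p N1 (\<lambda>j _ _. N2 j) upd z0 (k - 1))
               (\<lambda>h. (norm (snd (h ! (k - 1)) - F (fst (h ! (k - 1)))))\<^sup>2)
             + L0\<^sup>2 / real (N2 k) *
               measure_pmf.expectation (svrg_hist Fs D p N1 (\<lambda>j _ _. N2 j) upd z0 k)
                 (\<lambda>h. (norm (fst (h ! k) - fst (h ! (k - 1))))\<^sup>2))))
    \<and>
    (\<forall>(\<epsilon> :: real) (a :: real). \<epsilon> > 0 \<and> a > 0 \<longrightarrow>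
      (let p = (\<lambda>k. 1 - (real k / real (k + 1)) powr (2 * a)
                        / (2 - (real k / real (k + 1)) powr (2 * a + 1)));
           N1 = (\<lambda>k. nat \<lceil>2 * \<sigma>\<^sup>2 / (\<epsilon>\<^sup>2 * real (k + 1) powr (- (2 * a)))\<rceil>);
           N2 = (\<lambda>k zk zk1. nat \<lceil>2 * L0\<^sup>2 * (norm (zk - zk1))\<^sup>2
                                  / (\<epsilon>\<^sup>2 * real (k + 1) powr (- (2 * a + 1)))\<rceil>)
       in \<forall>k. measure_pmf.expectation (svrg_hist Fs D p N1 N2 upd z0 k)
                 (\<lambda>h. (norm (snd (h ! k) - F (fst (h ! k))))\<^sup>2)
               \<le> (\<epsilon> * real (k + 1) powr (- a))\<^sup>2))"
proof -
  have finD: "finite (set_pmf D)" using D_supp finite_subset by blast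
  have I: "integrable (measure_pmf D) f" for f :: "nat \<Rightarrow> 'a"
    using finD by (rule integrable_measure_pmf_finite)
  have LIP: "(norm (Fs i x - Fs i y))\<^sup>2 \<le> L0\<^sup>2 * (norm (x - y))\<^sup>2" if "i \<in> set_pmf D" for i x y
    using lip[OF _ L0_pos] coco D_supp that by blast
  have Fdiff: "measure_pmf.expectation D (\<lambda>i. Fs i x - Fs i y) = F x - F y" for x y
    by (simp add: I unbiased)
  have R: "measure_pmf.expectation (iid_pmf D n) (\<lambda>S. (norm (batch_avg (\<lambda>i. Fs i z) S - F z))\<^sup>2)
      \<le> \<sigma>\<^sup>2 / real n" if n: "n > 0" for n z
  proof -
    have "measure_pmf.expectation (iid_pmf D n) (\<lambda>S. (norm (0 + (batch_avg (\<lambda>i. Fs i z) S - F z)))\<^sup>2)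
       = (norm (0::'a))\<^sup>2 + measure_pmf.expectation D (\<lambda>i. (norm (Fs i z - F z))\<^sup>2) / real n"
      by (rule batch[OF finD n]) (use unbiased in simp)
    also have "\<dots> \<le> \<sigma>\<^sup>2 / real n"
      using var_bound n by (simp add: divide_right_mono)
    finally show ?thesis by simp
  qed
  have NR: "measure_pmf.expectation (iid_pmf D n)
        (\<lambda>S. (norm ((s + batch_avg (\<lambda>i. Fs i z' - Fs i z) S) - F z'))\<^sup>2)
      \<le> (norm (s - F z))\<^sup>2 + L0\<^sup>2 * (norm (z' - z))\<^sup>2 / real n" if n: "n > 0" for n s z z'
  proof -
    have eq: "(s + batch_avg (\<lambda>i. Fs i z' - Fs i z) S) - F z'
        = (s - F z) + (batch_avg (\<lambda>i. Fs i z' - Fs i z) S - (F z' - F z))" for S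
      by (simp add: algebra_simps)
    have "measure_pmf.expectation (iid_pmf D n)
        (\<lambda>S. (norm ((s - F z) + (batch_avg (\<lambda>i. Fs i z' - Fs i z) S - (F z' - F z))))\<^sup>2)
       = (norm (s - F z))\<^sup>2 + measure_pmf.expectation D
            (\<lambda>i. (norm ((Fs i z' - Fs i z) - (F z' - F z)))\<^sup>2) / real n"
      by (rule batch[OF finD n]) (rule Fdiff)
    also have "measure_pmf.expectation D (\<lambda>i. (norm ((Fs i z' - Fs i z) - (F z' - F z)))\<^sup>2)
       \<le> measure_pmf.expectation D (\<lambda>i. (norm (Fs i z' - Fs i z))\<^sup>2)"
      by (rule var_le[OF finD]) (rule Fdiff)
    also have "\<dots> \<le> measure_pmf.expectation D (\<lambda>i. L0\<^sup>2 * (norm (z' - z))\<^sup>2)"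
      by (rule E_mono[OF finD]) (rule LIP)
    also have "\<dots> = L0\<^sup>2 * (norm (z' - z))\<^sup>2" by simp
    finally show ?thesis unfolding eq using n by (simp add: divide_right_mono)
  qed
  have STEP: "measure_pmf.expectation (svrg_hist Fs D p N1 N2 upd z0 (Suc j))
        (\<lambda>h. (norm (snd (h ! Suc j) - F (fst (h ! Suc j))))\<^sup>2)
    \<le> measure_pmf.expectation (svrg_hist Fs D p N1 N2 upd z0 j)
        (\<lambda>h. \<sigma>\<^sup>2 / real (N1 (Suc j)) * p (Suc j)
            + ((norm (snd (h ! j) - F (fst (h ! j))))\<^sup>2
               + L0\<^sup>2 * (norm (upd j h - fst (h ! j)))\<^sup>2 / real (N2 (Suc j) (upd j h) (fst (h ! j))))
              * (1 - p (Suc j)))"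
    if p0: "0 \<le> p (Suc j)" and p1: "p (Suc j) \<le> 1" and n1: "N1 (Suc j) > 0"
      and n2: "\<And>z z'. N2 (Suc j) z z' = 0 \<Longrightarrow> z = z'"
    for p N1 N2 j
  proof -
    show ?thesis
    proof (subst E_hist_Suc[where p=p and k=j, OF finD p0 p1], rule E_mono[OF fin_hist[OF finD]])
      fix h assume h: "h \<in> set_pmf (svrg_hist Fs D p N1 N2 upd z0 j)"
      have len: "length h = Suc j" using len_hist[OF h] .
      hence lst: "last h = h ! j" by (cases h rule: rev_cases) (auto simp: nth_append)
      define z' where "z' = upd j h"
      define z where "z = fst (h ! j)"
      define s where "s = snd (h ! j)"
      define n where "n = N2 (Suc j) z' z"
      have A: "measure_pmf.expectation (iid_pmf D (N1 (Suc j)))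
           (\<lambda>S. (norm (batch_avg (\<lambda>i. Fs i z') S - F z'))\<^sup>2) \<le> \<sigma>\<^sup>2 / real (N1 (Suc j))"
        by (rule R[OF n1])
      have B: "measure_pmf.expectation (iid_pmf D n)
          (\<lambda>S. (norm ((s + batch_avg (\<lambda>i. Fs i z' - Fs i z) S) - F z'))\<^sup>2)
        \<le> (norm (s - F z))\<^sup>2 + L0\<^sup>2 * (norm (z' - z))\<^sup>2 / real n"
      proof (cases "n = 0")
        case True
        hence "z' = z" using n2 unfolding n_def by blast
        thus ?thesis using True by (simp add: batch_avg_def)
      qed (use NR in auto)
      have "measure_pmf.expectation (iid_pmf D (N1 (Suc j)))
           (\<lambda>S. (norm (batch_avg (\<lambda>i. Fs i z') S - F z'))\<^sup>2) * p (Suc j)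
         + measure_pmf.expectation (iid_pmf D n)
          (\<lambda>S. (norm ((s + batch_avg (\<lambda>i. Fs i z' - Fs i z) S) - F z'))\<^sup>2) * (1 - p (Suc j))
        \<le> \<sigma>\<^sup>2 / real (N1 (Suc j)) * p (Suc j)
          + ((norm (s - F z))\<^sup>2 + L0\<^sup>2 * (norm (z' - z))\<^sup>2 / real n) * (1 - p (Suc j))"
        using A B p0 p1 by (intro add_mono mult_right_mono) auto
      thus "measure_pmf.expectation (iid_pmf D (N1 (Suc j)))
           (\<lambda>S. (norm (snd ((h @ [(upd j h, batch_avg (\<lambda>i. Fs i (upd j h)) S)]) ! Suc j) - F (fst ((h @ [(upd j h, batch_avg (\<lambda>i. Fs i (upd j h)) S)]) ! Suc j))))\<^sup>2) * p (Suc j) +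
          measure_pmf.expectation (iid_pmf D (N2 (Suc j) (upd j h) (fst (last h))))
           (\<lambda>S. (norm (snd ((h @ [(upd j h, snd (last h) + batch_avg (\<lambda>i. Fs i (upd j h) - Fs i (fst (last h))) S)]) ! Suc j) - F (fst ((h @ [(upd j h, snd (last h) + batch_avg (\<lambda>i. Fs i (upd j h) - Fs i (fst (last h))) S)]) ! Suc j))))\<^sup>2) * (1 - p (Suc j))
         \<le> \<sigma>\<^sup>2 / real (N1 (Suc j)) * p (Suc j)
            + ((norm (snd (h ! j) - F (fst (h ! j))))\<^sup>2
               + L0\<^sup>2 * (norm (upd j h - fst (h ! j)))\<^sup>2 / real (N2 (Suc j) (upd j h) (fst (h ! j))))
              * (1 - p (Suc j))"
        using len by (simp add: lst z'_def z_def s_def n_def nth_append)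
    qed
  qed
  have DELTA: "measure_pmf.expectation (svrg_hist Fs D p N1 N2 upd z0 (Suc j))
        (\<lambda>h. (norm (fst (h ! Suc j) - fst (h ! j)))\<^sup>2)
    = measure_pmf.expectation (svrg_hist Fs D p N1 N2 upd z0 j)
        (\<lambda>h. (norm (upd j h - fst (h ! j)))\<^sup>2)"
    if p0: "0 \<le> p (Suc j)" and p1: "p (Suc j) \<le> 1" for p N1 N2 j
  proof (subst E_hist_Suc[where p=p and k=j, OF finD p0 p1], rule E_cong)
    fix h assume h: "h \<in> set_pmf (svrg_hist Fs D p N1 N2 upd z0 j)"
    have len: "length h = Suc j" using len_hist[OF h] .
    thus "measure_pmf.expectation (iid_pmf D (N1 (Suc j)))
           (\<lambda>S. (norm (fst ((h @ [(upd j h, batch_avg (\<lambda>i. Fs i (upd j h)) S)]) ! Suc j) - fst ((h @ [(upd j h, batch_avg (\<lambda>i. Fs i (upd j h)) S)]) ! j)))\<^sup>2) * p (Suc j) +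
          measure_pmf.expectation (iid_pmf D (N2 (Suc j) (upd j h) (fst (last h))))
           (\<lambda>S. (norm (fst ((h @ [(upd j h, snd (last h) + batch_avg (\<lambda>i. Fs i (upd j h) - Fs i (fst (last h))) S)]) ! Suc j) - fst ((h @ [(upd j h, snd (last h) + batch_avg (\<lambda>i. Fs i (upd j h) - Fs i (fst (last h))) S)]) ! j)))\<^sup>2) * (1 - p (Suc j))
         = (norm (upd j h - fst (h ! j)))\<^sup>2"
      by (simp add: nth_append algebra_simps)
  qed
  have BASE: "measure_pmf.expectation (svrg_hist Fs D p N1 N2 upd z0 0)
        (\<lambda>h. (norm (snd (h ! 0) - F (fst (h ! 0))))\<^sup>2) \<le> \<sigma>\<^sup>2 / real (N1 0)"
    if "N1 0 > 0" for p N1 N2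
    using R[OF that] by simp
  have IH: "integrable (measure_pmf (svrg_hist Fs D p N1 N2 upd z0 j)) f" for f :: "_ \<Rightarrow> real" and p N1 N2 j
    by (rule integrable_measure_pmf_finite[OF fin_hist[OF finD]])
  have P1: "\<forall>(p :: nat \<Rightarrow> real) (N1 :: nat \<Rightarrow> nat) (N2 :: nat \<Rightarrow> nat).
      (\<forall>k. 0 < p k \<and> p k \<le> 1) \<and> p 0 = 1 \<and> (\<forall>k. N1 k > 0) \<and> (\<forall>k. N2 k > 0) \<longrightarrow>
      (\<forall>k\<ge>1.
        measure_pmf.expectation (svrg_hist Fs D p N1 (\<lambda>j _ _. N2 j) upd z0 k)
          (\<lambda>h. (norm (snd (h ! k) - F (fst (h ! k))))\<^sup>2)
        \<le> p k * \<sigma>\<^sup>2 / real (N1 k)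
          + (1 - p k) *
            (measure_pmf.expectation (svrg_hist Fs D p N1 (\<lambda>j _ _. N2 j) upd z0 (k - 1))
               (\<lambda>h. (norm (snd (h ! (k - 1)) - F (fst (h ! (k - 1)))))\<^sup>2)
             + L0\<^sup>2 / real (N2 k) *
               measure_pmf.expectation (svrg_hist Fs D p N1 (\<lambda>j _ _. N2 j) upd z0 k)
                 (\<lambda>h. (norm (fst (h ! k) - fst (h ! (k - 1))))\<^sup>2)))"
  proof (intro allI impI)
    fix p :: "nat \<Rightarrow> real" and N1 N2 :: "nat \<Rightarrow> nat" and k :: nat
    assume asm: "(\<forall>k. 0 < p k \<and> p k \<le> 1) \<and> p 0 = 1 \<and> (\<forall>k. N1 k > 0) \<and> (\<forall>k. N2 k > 0)"
      and k: "k \<ge> 1"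
    obtain j where kj: "k = Suc j" using k by (cases k) auto
    define N2' where "N2' = (\<lambda>j (_::'a) (_::'a). N2 j)"
    have p0: "0 \<le> p (Suc j)" and p1: "p (Suc j) \<le> 1" using asm by (auto intro: less_imp_le)
    have "measure_pmf.expectation (svrg_hist Fs D p N1 N2' upd z0 (Suc j))
        (\<lambda>h. (norm (snd (h ! Suc j) - F (fst (h ! Suc j))))\<^sup>2)
      \<le> measure_pmf.expectation (svrg_hist Fs D p N1 N2' upd z0 j)
        (\<lambda>h. \<sigma>\<^sup>2 / real (N1 (Suc j)) * p (Suc j)
            + ((norm (snd (h ! j) - F (fst (h ! j))))\<^sup>2
               + L0\<^sup>2 * (norm (upd j h - fst (h ! j)))\<^sup>2 / real (N2' (Suc j) (upd j h) (fst (h ! j))))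
              * (1 - p (Suc j)))"
      by (rule STEP[where p=p and j=j, OF p0 p1]) (use asm in \<open>auto simp: N2'_def, metis less_numeral_extra(3)\<close>)
    also have "\<dots> = \<sigma>\<^sup>2 / real (N1 (Suc j)) * p (Suc j)
        + (measure_pmf.expectation (svrg_hist Fs D p N1 N2' upd z0 j)
              (\<lambda>h. (norm (snd (h ! j) - F (fst (h ! j))))\<^sup>2)
           + L0\<^sup>2 / real (N2 (Suc j)) * measure_pmf.expectation (svrg_hist Fs D p N1 N2' upd z0 j)
              (\<lambda>h. (norm (upd j h - fst (h ! j)))\<^sup>2)) * (1 - p (Suc j))"
      by (simp add: N2'_def IH integral_add algebra_simps)
    also have "measure_pmf.expectation (svrg_hist Fs D p N1 N2' upd z0 j)
              (\<lambda>h. (norm (upd j h - fst (h ! j)))\<^sup>2)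
        = measure_pmf.expectation (svrg_hist Fs D p N1 N2' upd z0 (Suc j))
              (\<lambda>h. (norm (fst (h ! Suc j) - fst (h ! j)))\<^sup>2)"
      by (rule DELTA[where p=p and j=j, OF p0 p1, symmetric])
    finally show "measure_pmf.expectation (svrg_hist Fs D p N1 (\<lambda>j _ _. N2 j) upd z0 k)
          (\<lambda>h. (norm (snd (h ! k) - F (fst (h ! k))))\<^sup>2)
        \<le> p k * \<sigma>\<^sup>2 / real (N1 k)
          + (1 - p k) *
            (measure_pmf.expectation (svrg_hist Fs D p N1 (\<lambda>j _ _. N2 j) upd z0 (k - 1))
               (\<lambda>h. (norm (snd (h ! (k - 1)) - F (fst (h ! (k - 1)))))\<^sup>2)
             + L0\<^sup>2 / real (N2 k) *
               measure_pmf.expectation (svrg_hist Fs D p N1 (\<lambda>j _ _. N2 j) upd z0 k)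
                 (\<lambda>h. (norm (fst (h ! k) - fst (h ! (k - 1))))\<^sup>2))"
      unfolding kj N2'_def by (simp add: algebra_simps)
  qed
  have P2: "\<forall>(\<epsilon> :: real) (a :: real). \<epsilon> > 0 \<and> a > 0 \<longrightarrow>
      (let p = (\<lambda>k. 1 - (real k / real (k + 1)) powr (2 * a)
                        / (2 - (real k / real (k + 1)) powr (2 * a + 1)));
           N1 = (\<lambda>k. nat \<lceil>2 * \<sigma>\<^sup>2 / (\<epsilon>\<^sup>2 * real (k + 1) powr (- (2 * a)))\<rceil>);
           N2 = (\<lambda>k zk zk1. nat \<lceil>2 * L0\<^sup>2 * (norm (zk - zk1))\<^sup>2
                                  / (\<epsilon>\<^sup>2 * real (k + 1) powr (- (2 * a + 1)))\<rceil>)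
       in \<forall>k. measure_pmf.expectation (svrg_hist Fs D p N1 N2 upd z0 k)
                 (\<lambda>h. (norm (snd (h ! k) - F (fst (h ! k))))\<^sup>2)
               \<le> (\<epsilon> * real (k + 1) powr (- a))\<^sup>2)"
  proof (intro allI impI)
    fix \<epsilon> a :: real assume ea: "\<epsilon> > 0 \<and> a > 0"
    hence e: "\<epsilon> > 0" and a: "a > 0" by auto
    define p where "p = (\<lambda>k. 1 - (real k / real (k + 1)) powr (2 * a)
                        / (2 - (real k / real (k + 1)) powr (2 * a + 1)))"
    define N1 where "N1 = (\<lambda>k. nat \<lceil>2 * \<sigma>\<^sup>2 / (\<epsilon>\<^sup>2 * real (k + 1) powr (- (2 * a)))\<rceil>)"
    define N2 where "N2 = (\<lambda>k (zk::'a) zk1. nat \<lceil>2 * L0\<^sup>2 * (norm (zk - zk1))\<^sup>2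
                                  / (\<epsilon>\<^sup>2 * real (k + 1) powr (- (2 * a + 1)))\<rceil>)"
    define C1 where "C1 k = \<epsilon>\<^sup>2 * real (k + 1) powr (- (2 * a))" for k :: nat
    define C2 where "C2 k = \<epsilon>\<^sup>2 * real (k + 1) powr (- (2 * a + 1))" for k :: nat
    have C1: "C1 k > 0" for k unfolding C1_def using e by simp
    have C2: "C2 k > 0" for k unfolding C2_def using e by simp
    have pr: "0 \<le> p k" "p k \<le> 1" for k unfolding p_def using p_range[OF a] by auto
    have N1b: "\<sigma>\<^sup>2 / real (N1 k) \<le> C1 k / 2" for k
      unfolding N1_def C1_def[symmetric] by (rule ceil_bound) (use C1 in auto)
    have N1p: "N1 k > 0" for k
    proof -
      have "2 * \<sigma>\<^sup>2 / C1 k > 0" using C1[of k] sigma_pos by simp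
      thus ?thesis unfolding N1_def C1_def[symmetric] by simp
    qed
    have N2b: "L0\<^sup>2 * (norm (z - z'))\<^sup>2 / real (N2 k z z') \<le> C2 k / 2" for k z z'
    proof -
      have "L0\<^sup>2 * (norm (z - z'))\<^sup>2 / real (nat \<lceil>2 * (L0\<^sup>2 * (norm (z - z'))\<^sup>2) / C2 k\<rceil>) \<le> C2 k / 2"
        by (rule ceil_bound) (use C2 in auto)
      thus ?thesis unfolding N2_def C2_def[symmetric] by (simp add: mult.assoc)
    qed
    have N2z: "z = z'" if "N2 k z z' = 0" for k z z'
    proof (rule ccontr)
      assume "z \<noteq> z'"
      hence "2 * L0\<^sup>2 * (norm (z - z'))\<^sup>2 / C2 k > 0" using C2[of k] L0_pos by simp
      thus False using that unfolding N2_def C2_def[symmetric] by simp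
    qed
    let ?E = "\<lambda>k. measure_pmf.expectation (svrg_hist Fs D p N1 N2 upd z0 k)
                 (\<lambda>h. (norm (snd (h ! k) - F (fst (h ! k))))\<^sup>2)"
    have main: "?E k \<le> (\<epsilon> * real (k + 1) powr (- a))\<^sup>2" for k
    proof (induction k)
      case 0
      have "?E 0 \<le> \<sigma>\<^sup>2 / real (N1 0)" by (rule BASE[OF N1p])
      also have "\<dots> \<le> C1 0 / 2" by (rule N1b)
      also have "\<dots> \<le> (\<epsilon> * real (0 + 1) powr (- a))\<^sup>2" unfolding C1_def using e by simp
      finally show ?case .
    next
      case (Suc j)
      have "?E (Suc j) \<le> measure_pmf.expectation (svrg_hist Fs D p N1 N2 upd z0 j)
        (\<lambda>h. \<sigma>\<^sup>2 / real (N1 (Suc j)) * p (Suc j)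
            + ((norm (snd (h ! j) - F (fst (h ! j))))\<^sup>2
               + L0\<^sup>2 * (norm (upd j h - fst (h ! j)))\<^sup>2 / real (N2 (Suc j) (upd j h) (fst (h ! j))))
              * (1 - p (Suc j)))"
        by (rule STEP[where p=p and j=j and ?N1.0=N1 and ?N2.0=N2, OF pr(1) pr(2) N1p N2z])
      also have "\<dots> \<le> measure_pmf.expectation (svrg_hist Fs D p N1 N2 upd z0 j)
        (\<lambda>h. C1 (Suc j) / 2 * p (Suc j)
            + ((norm (snd (h ! j) - F (fst (h ! j))))\<^sup>2 + C2 (Suc j) / 2) * (1 - p (Suc j)))"
        using N1b N2b pr[of "Suc j"]
        by (intro E_mono[OF fin_hist[OF finD]] add_mono mult_right_mono) auto
      also have "\<dots> = C1 (Suc j) / 2 * p (Suc j) + (?E j + C2 (Suc j) / 2) * (1 - p (Suc j))"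
        by (simp add: IH integral_add algebra_simps)
      also have "\<dots> \<le> C1 (Suc j) / 2 * p (Suc j)
          + ((\<epsilon> * real (j + 1) powr (- a))\<^sup>2 + C2 (Suc j) / 2) * (1 - p (Suc j))"
        using Suc.IH pr[of "Suc j"] by (intro add_mono mult_right_mono) auto
      also have "\<dots> \<le> (\<epsilon> * real (Suc j + 1) powr (- a))\<^sup>2"
      proof -
        have r: "real (Suc j + 1) = real (Suc j) + 1" "real (j + 1) = real (Suc j)" by simp_all
        show ?thesis
          using alg[of "real (Suc j)" a \<epsilon>] a
          unfolding C1_def C2_def p_def r by (simp add: mult.assoc)
      qed
      finally show ?case .
    qed
    show "let p = (\<lambda>k. 1 - (real k / real (k + 1)) powr (2 * a)
                        / (2 - (real k / real (k + 1)) powr (2 * a + 1)));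
           N1 = (\<lambda>k. nat \<lceil>2 * \<sigma>\<^sup>2 / (\<epsilon>\<^sup>2 * real (k + 1) powr (- (2 * a)))\<rceil>);
           N2 = (\<lambda>k zk zk1. nat \<lceil>2 * L0\<^sup>2 * (norm (zk - zk1))\<^sup>2
                                  / (\<epsilon>\<^sup>2 * real (k + 1) powr (- (2 * a + 1)))\<rceil>)
       in \<forall>k. measure_pmf.expectation (svrg_hist Fs D p N1 N2 upd z0 k)
                 (\<lambda>h. (norm (snd (h ! k) - F (fst (h ! k))))\<^sup>2)
               \<le> (\<epsilon> * real (k + 1) powr (- a))\<^sup>2"
      unfolding Let_def p_def[symmetric] N1_def[symmetric] N2_def[symmetric] using main by blast
  qed
  show ?thesis using P1 P2 by blast
qed

end
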